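(* Let $\iota:\mathbf{CFam}_S\to\mathbf{C}$ be an $S$-sorted CCC and $D$ a cartesian closed natural system on $\mathbf{C}$. Then there is an isomorphism of abelian groups \[ \mathrm{Der}^{\mathbf{CCC}_S}(\mathbf{C};D)\cong\Big\{d\in\prod_{f\in\mathrm{Mor}(\mathbf{C})}D_f\ \Big|\ d(f\circ g)=f_*d(g)+g^*d(f)\ \text{for composable } f,g,\ \ d(\iota(\pi_i))=0,\ \ d(\iota(\mathrm{ev}^Y_Z))=0\Big\}, \] where $\pi_i$ ranges over the projections and $\mathrm{ev}^Y_Z$ over the evaluation maps of $\mathbf{CFam}_S$.
   Context: $\mathsf{BiMag}_S$ is the set of formal expressions generated from the elements of $S$ and $1$ by $X\times Y$ and $Y^X$; $\mathbf{CFam}_S$ is the free cartesian closed category with object set $\mathsf{BiMag}_S$ and no generating morphisms (generated by identities, $!_X$, projections $\pi_i$, evaluations $\mathrm{ev}^Y_Z:Z^Y\times Y\to Z$, composition, pairing, currying). An $S$-sorted CCC is a CCC $\mathbf{C}$ with $\mathrm{Ob}(\mathbf{C})=\mathsf{BiMag}_S$ and a cartesian closed identity-on-objects functor $\iota:\mathbf{CFam}_S\to\mathbf{C}$; $\mathbf{CCC}_S$ has as morphisms the functors $F$ with $F\circ\iota=\iota'$. A natural system on $\mathbf{C}$ is a functor $D$ from the category of factorizations of $\mathbf{C}$ (objects: morphisms $f$; morphisms $f\to g$: pairs $(a,b)$ with $bfa=g$) to $\mathbf{Ab}$; $D_f=D(f)$, $a_*=D(1,a):D_f\to D_{af}$,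 $a^*=D(a,1):D_g\to D_{ga}$. $D$ is cartesian if $D_f\to\prod_kD_{\pi_kf}$, $\xi\mapsto(\pi_{k*}\xi)$, is an isomorphism for all $f:X\to X_1\times\dots\times X_n$; it is cartesian closed if moreover, for each $f:X\times Y\to Z$, the map $D_{\lambda f}\to D_f$, $\xi\mapsto\mathrm{ev}^Y_{Z*}\phi_{\lambda f}(\xi,0)$ is an isomorphism, where $\phi_g:D_g\times D_{\pi_2}\to D_{g\times 1_Y}$ is $\pi_1^*\times 1$ followed by the inverse of the cartesian isomorphism $D_{g\times1_Y}\to D_{g\pi_1}\times D_{\pi_2}$. The trivial extension $D\rtimes\mathbf{C}$ has $\mathrm{Hom}(X,Y)=\coprod_{f:X\to Y}D_f$ with composition $\xi\circ\eta=f_*\eta+g^*\xi$ ($\xi\in D_f,\eta\in D_g$); for cartesian closed $D$ it is an $S$-sorted CCC with $\tilde\iota$ sending identities, projections and evaluations to the zero elements over their images under $\iota$, and $p:D\rtimes\mathbf{C}\to\mathbf{C}$ is the projection. $\mathrm{Der}^{\mathbf{CCC}_S}(\mathbf{C};D)$ is the abelian group of morphisms $s:\mathbf{C}\to D\rtimes\mathbf{C}$ in $\mathbf{CCC}_S$ with $ps=\mathrm{id}_{\mathbf{C}}$. *)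

theory Defs
  imports Main "HOL-Library.FuncSet" "HOL-Algebra.Group"
begin

text \<open>BExp Y Z stands for the exponential object Z^Y.\<close>
datatype 's bimag = BSrt 's | BOne | BTimes "'s bimag" "'s bimag" | BExp "'s bimag" "'s bimag"

text \<open>A category with object set BiMag_S, together with the images under iota of the
projections and evaluation maps of CFam_S.\<close>
record ('s, 'm) sccc =
  c_mor :: "'m set"
  c_dom :: "'m \<Rightarrow> 's bimag"
  c_cod :: "'m \<Rightarrow> 's bimag"
  c_cmp :: "'m \<Rightarrow> 'm \<Rightarrow> 'm"
  c_id  :: "'s bimag \<Rightarrow> 'm"
  c_p1  :: "'s bimag \<Rightarrow> 's bimag \<Rightarrow> 'm"
  c_p2  :: "'s bimag \<Rightarrow> 's bimag \<Rightarrow> 'm"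
  c_ev  :: "'s bimag \<Rightarrow> 's bimag \<Rightarrow> 'm"

definition pairing :: "('s,'m,'x) sccc_scheme \<Rightarrow> 'm \<Rightarrow> 'm \<Rightarrow> 'm" where
  "pairing C f g = (THE h. h \<in> c_mor C \<and> c_dom C h = c_dom C f
      \<and> c_cod C h = BTimes (c_cod C f) (c_cod C g)
      \<and> c_cmp C (c_p1 C (c_cod C f) (c_cod C g)) h = f
      \<and> c_cmp C (c_p2 C (c_cod C f) (c_cod C g)) h = g)"

definition prodmap :: "('s,'m,'x) sccc_scheme \<Rightarrow> 'm \<Rightarrow> 'm \<Rightarrow> 'm" where
  "prodmap C h k = pairing C (c_cmp C h (c_p1 C (c_dom C h) (c_dom C k)))
                             (c_cmp C k (c_p2 C (c_dom C h) (c_dom C k)))"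

definition curry_m :: "('s,'m,'x) sccc_scheme \<Rightarrow> 's bimag \<Rightarrow> 's bimag \<Rightarrow> 'm \<Rightarrow> 'm" where
  "curry_m C X Y f = (THE h. h \<in> c_mor C \<and> c_dom C h = X \<and> c_cod C h = BExp Y (c_cod C f)
      \<and> c_cmp C (c_ev C Y (c_cod C f)) (prodmap C h (c_id C Y)) = f)"

definition bang :: "('s,'m,'x) sccc_scheme \<Rightarrow> 's bimag \<Rightarrow> 'm" where
  "bang C X = (THE h. h \<in> c_mor C \<and> c_dom C h = X \<and> c_cod C h = BOne)"

definition is_sccc :: "('s,'m,'x) sccc_scheme \<Rightarrow> bool" where
  "is_sccc C \<longleftrightarrow>
    \<comment> \<open>category axioms\<close>
    (\<forall>X. c_id C X \<in> c_mor C \<and> c_dom C (c_id C X) = X \<and> c_cod C (c_id C X) = X) \<and>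
    (\<forall>f\<in>c_mor C. \<forall>g\<in>c_mor C. c_dom C f = c_cod C g \<longrightarrow>
        c_cmp C f g \<in> c_mor C \<and> c_dom C (c_cmp C f g) = c_dom C g \<and> c_cod C (c_cmp C f g) = c_cod C f) \<and>
    (\<forall>f\<in>c_mor C. \<forall>g\<in>c_mor C. \<forall>h\<in>c_mor C. c_dom C f = c_cod C g \<longrightarrow> c_dom C g = c_cod C h \<longrightarrow>
        c_cmp C (c_cmp C f g) h = c_cmp C f (c_cmp C g h)) \<and>
    (\<forall>f\<in>c_mor C. c_cmp C (c_id C (c_cod C f)) f = f \<and> c_cmp C f (c_id C (c_dom C f)) = f) \<and>
    \<comment> \<open>structure maps (images of the generators of CFam_S under iota)\<close>
    (\<forall>X Y. c_p1 C X Y \<in> c_mor C \<and> c_dom C (c_p1 C X Y) = BTimes X Y \<and> c_cod C (c_p1 C X Y) = X) \<and>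
    (\<forall>X Y. c_p2 C X Y \<in> c_mor C \<and> c_dom C (c_p2 C X Y) = BTimes X Y \<and> c_cod C (c_p2 C X Y) = Y) \<and>
    (\<forall>Y Z. c_ev C Y Z \<in> c_mor C \<and> c_dom C (c_ev C Y Z) = BTimes (BExp Y Z) Y \<and> c_cod C (c_ev C Y Z) = Z) \<and>
    \<comment> \<open>iota is cartesian closed: 1 terminal, X x Y a product, Z^Y an exponential\<close>
    (\<forall>X. \<exists>!h. h \<in> c_mor C \<and> c_dom C h = X \<and> c_cod C h = BOne) \<and>
    (\<forall>f\<in>c_mor C. \<forall>g\<in>c_mor C. c_dom C f = c_dom C g \<longrightarrow>
        (\<exists>!h. h \<in> c_mor C \<and> c_dom C h = c_dom C f \<and> c_cod C h = BTimes (c_cod C f) (c_cod C g)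
            \<and> c_cmp C (c_p1 C (c_cod C f) (c_cod C g)) h = f
            \<and> c_cmp C (c_p2 C (c_cod C f) (c_cod C g)) h = g)) \<and>
    (\<forall>f\<in>c_mor C. \<forall>X Y. c_dom C f = BTimes X Y \<longrightarrow>
        (\<exists>!h. h \<in> c_mor C \<and> c_dom C h = X \<and> c_cod C h = BExp Y (c_cod C f)
            \<and> c_cmp C (c_ev C Y (c_cod C f)) (prodmap C h (c_id C Y)) = f))"

datatype 's cterm =
    TId "'s bimag" | TBang "'s bimag" | TP1 "'s bimag" "'s bimag" | TP2 "'s bimag" "'s bimag"
  | TEv "'s bimag" "'s bimag" | TComp "'s cterm" "'s cterm" | TPair "'s cterm" "'s cterm"
  | TCurry "'s cterm"

fun bfst :: "'s bimag \<Rightarrow> 's bimag" where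
  "bfst (BTimes X Y) = X" | "bfst _ = BOne"
fun bsnd :: "'s bimag \<Rightarrow> 's bimag" where
  "bsnd (BTimes X Y) = Y" | "bsnd _ = BOne"
fun is_times :: "'s bimag \<Rightarrow> bool" where
  "is_times (BTimes X Y) = True" | "is_times _ = False"

fun tdom :: "'s cterm \<Rightarrow> 's bimag" and tcod :: "'s cterm \<Rightarrow> 's bimag" where
  "tdom (TId X) = X" | "tcod (TId X) = X"
| "tdom (TBang X) = X" | "tcod (TBang X) = BOne"
| "tdom (TP1 X Y) = BTimes X Y" | "tcod (TP1 X Y) = X"
| "tdom (TP2 X Y) = BTimes X Y" | "tcod (TP2 X Y) = Y"
| "tdom (TEv Y Z) = BTimes (BExp Y Z) Y" | "tcod (TEv Y Z) = Z"
| "tdom (TComp t u) = tdom u" | "tcod (TComp t u) = tcod t"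
| "tdom (TPair t u) = tdom t" | "tcod (TPair t u) = BTimes (tcod t) (tcod u)"
| "tdom (TCurry t) = bfst (tdom t)" | "tcod (TCurry t) = BExp (bsnd (tdom t)) (tcod t)"

fun wt :: "'s cterm \<Rightarrow> bool" where
  "wt (TComp t u) = (wt t \<and> wt u \<and> tdom t = tcod u)"
| "wt (TPair t u) = (wt t \<and> wt u \<and> tdom t = tdom u)"
| "wt (TCurry t) = (wt t \<and> is_times (tdom t))"
| "wt _ = True"

text \<open>Interpretation of a CFam_S term in an S-sorted CCC; for C this is iota.\<close>
fun interp :: "('s,'m,'x) sccc_scheme \<Rightarrow> 's cterm \<Rightarrow> 'm" where
  "interp C (TId X) = c_id C X"
| "interp C (TBang X) = bang C X"
| "interp C (TP1 X Y) = c_p1 C X Y"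
| "interp C (TP2 X Y) = c_p2 C X Y"
| "interp C (TEv Y Z) = c_ev C Y Z"
| "interp C (TComp t u) = c_cmp C (interp C t) (interp C u)"
| "interp C (TPair t u) = pairing C (interp C t) (interp C u)"
| "interp C (TCurry t) = curry_m C (bfst (tdom t)) (bsnd (tdom t)) (interp C t)"

text \<open>D_f is the subgroup ns_D f of the ambient abelian group 'a;
ns_map f a b is D(a,b) : D_f -> D_{b f a}.\<close>
record ('m, 'a) natsys =
  ns_D   :: "'m \<Rightarrow> 'a set"
  ns_map :: "'m \<Rightarrow> 'm \<Rightarrow> 'm \<Rightarrow> 'a \<Rightarrow> 'a"

definition is_natsys :: "('s,'m,'x) sccc_scheme \<Rightarrow> ('m, 'a::ab_group_add) natsys \<Rightarrow> bool" where
  "is_natsys C D \<longleftrightarrow>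
    (\<forall>f\<in>c_mor C. 0 \<in> ns_D D f \<and> (\<forall>x\<in>ns_D D f. \<forall>y\<in>ns_D D f. x + y \<in> ns_D D f) \<and>
        (\<forall>x\<in>ns_D D f. - x \<in> ns_D D f)) \<and>
    (\<forall>f\<in>c_mor C. \<forall>a\<in>c_mor C. \<forall>b\<in>c_mor C. c_cod C a = c_dom C f \<longrightarrow> c_dom C b = c_cod C f \<longrightarrow>
        (\<forall>x\<in>ns_D D f. ns_map D f a b x \<in> ns_D D (c_cmp C b (c_cmp C f a))) \<and>
        (\<forall>x\<in>ns_D D f. \<forall>y\<in>ns_D D f. ns_map D f a b (x + y) = ns_map D f a b x + ns_map D f a b y)) \<and>
    (\<forall>f\<in>c_mor C. \<forall>x\<in>ns_D D f. ns_map D f (c_id C (c_dom C f)) (c_id C (c_cod C f)) x = x) \<and>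
    (\<forall>f\<in>c_mor C. \<forall>a\<in>c_mor C. \<forall>b\<in>c_mor C. \<forall>a'\<in>c_mor C. \<forall>b'\<in>c_mor C.
        c_cod C a = c_dom C f \<longrightarrow> c_dom C b = c_cod C f \<longrightarrow> c_cod C a' = c_dom C a \<longrightarrow> c_dom C b' = c_cod C b \<longrightarrow>
        (\<forall>x\<in>ns_D D f. ns_map D (c_cmp C b (c_cmp C f a)) a' b' (ns_map D f a b x)
                        = ns_map D f (c_cmp C a a') (c_cmp C b' b) x))"

text \<open>a_* : D_f -> D_{af} and a^* : D_g -> D_{ga}.\<close>
definition lower :: "('s,'m,'x) sccc_scheme \<Rightarrow> ('m,'a) natsys \<Rightarrow> 'm \<Rightarrow> 'm \<Rightarrow> 'a \<Rightarrow> 'a" where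
  "lower C D f a x = ns_map D f (c_id C (c_dom C f)) a x"
definition upper :: "('s,'m,'x) sccc_scheme \<Rightarrow> ('m,'a) natsys \<Rightarrow> 'm \<Rightarrow> 'm \<Rightarrow> 'a \<Rightarrow> 'a" where
  "upper C D g a x = ns_map D g a (c_id C (c_cod C g)) x"

definition is_cartesian :: "('s,'m,'x) sccc_scheme \<Rightarrow> ('m, 'a::ab_group_add) natsys \<Rightarrow> bool" where
  "is_cartesian C D \<longleftrightarrow>
    (\<forall>f\<in>c_mor C. c_cod C f = BOne \<longrightarrow> ns_D D f = {0}) \<and>
    (\<forall>f\<in>c_mor C. \<forall>X Y. c_cod C f = BTimes X Y \<longrightarrow>
       bij_betw (\<lambda>x. (lower C D f (c_p1 C X Y) x, lower C D f (c_p2 C X Y) x))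
         (ns_D D f) (ns_D D (c_cmp C (c_p1 C X Y) f) \<times> ns_D D (c_cmp C (c_p2 C X Y) f)))"

text \<open>phi_g(x, 0) for g : X -> Z^Y: the unique element of D_{g x 1_Y} whose images under
pi_1_* and pi_2_* are pi_1^* x and 0.\<close>
definition phi0 :: "('s,'m,'x) sccc_scheme \<Rightarrow> ('m,'a::ab_group_add) natsys \<Rightarrow> 's bimag \<Rightarrow> 's bimag \<Rightarrow> 'm \<Rightarrow> 'a \<Rightarrow> 'a" where
  "phi0 C D X Y g x = (let gy = prodmap C g (c_id C Y) in
     THE y. y \<in> ns_D D gy
       \<and> lower C D gy (c_p1 C (c_cod C g) Y) y = upper C D g (c_p1 C X Y) x
       \<and> lower C D gy (c_p2 C (c_cod C g) Y) y = 0)"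

definition is_cart_closed :: "('s,'m,'x) sccc_scheme \<Rightarrow> ('m, 'a::ab_group_add) natsys \<Rightarrow> bool" where
  "is_cart_closed C D \<longleftrightarrow> is_cartesian C D \<and>
    (\<forall>f\<in>c_mor C. \<forall>X Y. c_dom C f = BTimes X Y \<longrightarrow>
       (let lf = curry_m C X Y f in
        bij_betw (\<lambda>x. lower C D (prodmap C lf (c_id C Y)) (c_ev C Y (c_cod C f)) (phi0 C D X Y lf x))
          (ns_D D lf) (ns_D D f)))"

definition triv :: "('s,'m,'x) sccc_scheme \<Rightarrow> ('m,'a::ab_group_add) natsys \<Rightarrow> ('s, 'm \<times> 'a) sccc" where
  "triv C D = \<lparr> c_mor = {(f, x). f \<in> c_mor C \<and> x \<in> ns_D D f},
     c_dom = (\<lambda>p. c_dom C (fst p)), c_cod = (\<lambda>p. c_cod C (fst p)),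
     c_cmp = (\<lambda>p q. (c_cmp C (fst p) (fst q),
                     lower C D (fst q) (fst p) (snd q) + upper C D (fst p) (fst q) (snd p))),
     c_id = (\<lambda>X. (c_id C X, 0)),
     c_p1 = (\<lambda>X Y. (c_p1 C X Y, 0)), c_p2 = (\<lambda>X Y. (c_p2 C X Y, 0)),
     c_ev = (\<lambda>Y Z. (c_ev C Y Z, 0)) \<rparr>"

text \<open>Der^{CCC_S}(C;D): functors s : C -> D x| C with p s = id and s o iota = iota~
(extensional outside the morphisms of C).\<close>
definition Der :: "('s,'m,'x) sccc_scheme \<Rightarrow> ('m,'a::ab_group_add) natsys \<Rightarrow> ('m \<Rightarrow> 'm \<times> 'a) set" where
  "Der C D = {s. s \<in> extensional (c_mor C) \<and>
     (\<forall>f\<in>c_mor C. s f \<in> c_mor (triv C D) \<and> fst (s f) = f) \<and>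
     (\<forall>X. s (c_id C X) = c_id (triv C D) X) \<and>
     (\<forall>f\<in>c_mor C. \<forall>g\<in>c_mor C. c_dom C f = c_cod C g \<longrightarrow>
         s (c_cmp C f g) = c_cmp (triv C D) (s f) (s g)) \<and>
     (\<forall>t. wt t \<longrightarrow> s (interp C t) = interp (triv C D) t)}"

definition Der_grp :: "('s,'m,'x) sccc_scheme \<Rightarrow> ('m,'a::ab_group_add) natsys \<Rightarrow> ('m \<Rightarrow> 'm \<times> 'a) monoid" where
  "Der_grp C D = \<lparr> carrier = Der C D,
     mult = (\<lambda>s s' f. if f \<in> c_mor C then (f, snd (s f) + snd (s' f)) else undefined),
     one = (\<lambda>f. if f \<in> c_mor C then (f, 0) else undefined) \<rparr>"

definition DerFun :: "('s,'m,'x) sccc_scheme \<Rightarrow> ('m,'a::ab_group_add) natsys \<Rightarrow> ('m \<Rightarrow> 'a) set" where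
  "DerFun C D = {d. d \<in> extensional (c_mor C) \<and>
     (\<forall>f\<in>c_mor C. d f \<in> ns_D D f) \<and>
     (\<forall>f\<in>c_mor C. \<forall>g\<in>c_mor C. c_dom C f = c_cod C g \<longrightarrow>
         d (c_cmp C f g) = lower C D g f (d g) + upper C D f g (d f)) \<and>
     (\<forall>X Y. d (c_p1 C X Y) = 0 \<and> d (c_p2 C X Y) = 0) \<and>
     (\<forall>Y Z. d (c_ev C Y Z) = 0)}"

definition DerFun_grp :: "('s,'m,'x) sccc_scheme \<Rightarrow> ('m,'a::ab_group_add) natsys \<Rightarrow> ('m \<Rightarrow> 'a) monoid" where
  "DerFun_grp C D = \<lparr> carrier = DerFun C D,
     mult = (\<lambda>d d' f. if f \<in> c_mor C then d f + d' f else undefined),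
     one = (\<lambda>f. if f \<in> c_mor C then 0 else undefined) \<rparr>"

end

theory Submission
  imports Defs
begin


lemma triv_simps[simp]:
  "c_mor (triv C D) = {(f, x). f \<in> c_mor C \<and> x \<in> ns_D D f}"
  "c_dom (triv C D) p = c_dom C (fst p)"
  "c_cod (triv C D) p = c_cod C (fst p)"
  "c_cmp (triv C D) p q = (c_cmp C (fst p) (fst q),
                     lower C D (fst q) (fst p) (snd q) + upper C D (fst p) (fst q) (snd p))"
  "c_id (triv C D) X = (c_id C X, 0)"
  "c_p1 (triv C D) X Y = (c_p1 C X Y, 0)"
  "c_p2 (triv C D) X Y = (c_p2 C X Y, 0)"
  "c_ev (triv C D) Y Z = (c_ev C Y Z, 0)"
  by (simp_all add: triv_def)

locale dctx =
  fixes C :: "('s, 'm) sccc" and D :: "('m, 'a::ab_group_add) natsys"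
  assumes CC: "is_sccc C" and NN: "is_natsys C D" and CL: "is_cart_closed C D"
begin

lemma ax:
  "(\<forall>X. c_id C X \<in> c_mor C \<and> c_dom C (c_id C X) = X \<and> c_cod C (c_id C X) = X)"
  "(\<forall>f\<in>c_mor C. \<forall>g\<in>c_mor C. c_dom C f = c_cod C g \<longrightarrow>
        c_cmp C f g \<in> c_mor C \<and> c_dom C (c_cmp C f g) = c_dom C g \<and> c_cod C (c_cmp C f g) = c_cod C f)"
  "(\<forall>f\<in>c_mor C. \<forall>g\<in>c_mor C. \<forall>h\<in>c_mor C. c_dom C f = c_cod C g \<longrightarrow> c_dom C g = c_cod C h \<longrightarrow>
        c_cmp C (c_cmp C f g) h = c_cmp C f (c_cmp C g h))"
  "(\<forall>f\<in>c_mor C. c_cmp C (c_id C (c_cod C f)) f = f \<and> c_cmp C f (c_id C (c_dom C f)) = f)"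
  "(\<forall>X Y. c_p1 C X Y \<in> c_mor C \<and> c_dom C (c_p1 C X Y) = BTimes X Y \<and> c_cod C (c_p1 C X Y) = X)"
  "(\<forall>X Y. c_p2 C X Y \<in> c_mor C \<and> c_dom C (c_p2 C X Y) = BTimes X Y \<and> c_cod C (c_p2 C X Y) = Y)"
  "(\<forall>Y Z. c_ev C Y Z \<in> c_mor C \<and> c_dom C (c_ev C Y Z) = BTimes (BExp Y Z) Y \<and> c_cod C (c_ev C Y Z) = Z)"
  "(\<forall>X. \<exists>!h. h \<in> c_mor C \<and> c_dom C h = X \<and> c_cod C h = BOne)"
  "(\<forall>f\<in>c_mor C. \<forall>g\<in>c_mor C. c_dom C f = c_dom C g \<longrightarrow>
        (\<exists>!h. h \<in> c_mor C \<and> c_dom C h = c_dom C f \<and> c_cod C h = BTimes (c_cod C f) (c_cod C g)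
            \<and> c_cmp C (c_p1 C (c_cod C f) (c_cod C g)) h = f
            \<and> c_cmp C (c_p2 C (c_cod C f) (c_cod C g)) h = g))"
  "(\<forall>f\<in>c_mor C. \<forall>X Y. c_dom C f = BTimes X Y \<longrightarrow>
        (\<exists>!h. h \<in> c_mor C \<and> c_dom C h = X \<and> c_cod C h = BExp Y (c_cod C f)
            \<and> c_cmp C (c_ev C Y (c_cod C f)) (prodmap C h (c_id C Y)) = f))"
  by (insert CC[unfolded is_sccc_def], (elim conjE, assumption)+)

lemma id_ok: "c_id C X \<in> c_mor C" "c_dom C (c_id C X) = X" "c_cod C (c_id C X) = X"
  using ax(1) by blast+

lemma cmp_ok:
  assumes "f \<in> c_mor C" "g \<in> c_mor C" "c_dom C f = c_cod C g"
  shows "c_cmp C f g \<in> c_mor C" "c_dom C (c_cmp C f g) = c_dom C g" "c_cod C (c_cmp C f g) = c_cod C f"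
  using ax(2) assms by blast+

lemma assoc:
  assumes "f \<in> c_mor C" "g \<in> c_mor C" "h \<in> c_mor C" "c_dom C f = c_cod C g" "c_dom C g = c_cod C h"
  shows "c_cmp C (c_cmp C f g) h = c_cmp C f (c_cmp C g h)"
  using ax(3) assms by blast

lemma id_l: "f \<in> c_mor C \<Longrightarrow> c_cmp C (c_id C (c_cod C f)) f = f"
  using ax(4) by blast
lemma id_r: "f \<in> c_mor C \<Longrightarrow> c_cmp C f (c_id C (c_dom C f)) = f"
  using ax(4) by blast

lemma p1_ok: "c_p1 C X Y \<in> c_mor C" "c_dom C (c_p1 C X Y) = BTimes X Y" "c_cod C (c_p1 C X Y) = X"
  using ax(5) by blast+
lemma p2_ok: "c_p2 C X Y \<in> c_mor C" "c_dom C (c_p2 C X Y) = BTimes X Y" "c_cod C (c_p2 C X Y) = Y"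
  using ax(6) by blast+
lemma ev_ok: "c_ev C Y Z \<in> c_mor C" "c_dom C (c_ev C Y Z) = BTimes (BExp Y Z) Y" "c_cod C (c_ev C Y Z) = Z"
  using ax(7) by blast+

lemma bang_ex1: "\<exists>!h. h \<in> c_mor C \<and> c_dom C h = X \<and> c_cod C h = BOne"
  using ax(8) by blast

lemma bang_ok: "bang C X \<in> c_mor C \<and> c_dom C (bang C X) = X \<and> c_cod C (bang C X) = BOne"
  unfolding bang_def by (rule theI'[OF bang_ex1])

lemma bang_uniq: "h \<in> c_mor C \<Longrightarrow> c_dom C h = X \<Longrightarrow> c_cod C h = BOne \<Longrightarrow> h = bang C X"
  unfolding bang_def by (rule the1_equality[OF bang_ex1, symmetric]) simp

lemma pair_ex1:
  assumes "f \<in> c_mor C" "g \<in> c_mor C" "c_dom C f = c_dom C g"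
  shows "\<exists>!h. h \<in> c_mor C \<and> c_dom C h = c_dom C f \<and> c_cod C h = BTimes (c_cod C f) (c_cod C g)
            \<and> c_cmp C (c_p1 C (c_cod C f) (c_cod C g)) h = f
            \<and> c_cmp C (c_p2 C (c_cod C f) (c_cod C g)) h = g"
  using ax(9) assms by blast

lemma pair_ok:
  assumes "f \<in> c_mor C" "g \<in> c_mor C" "c_dom C f = c_dom C g"
  shows "pairing C f g \<in> c_mor C \<and> c_dom C (pairing C f g) = c_dom C f
     \<and> c_cod C (pairing C f g) = BTimes (c_cod C f) (c_cod C g)
            \<and> c_cmp C (c_p1 C (c_cod C f) (c_cod C g)) (pairing C f g) = f
            \<and> c_cmp C (c_p2 C (c_cod C f) (c_cod C g)) (pairing C f g) = g"
  unfolding pairing_def by (rule theI'[OF pair_ex1[OF assms]])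

lemma pair_uniq:
  assumes "f \<in> c_mor C" "g \<in> c_mor C" "c_dom C f = c_dom C g"
   "h \<in> c_mor C" "c_dom C h = c_dom C f" "c_cod C h = BTimes (c_cod C f) (c_cod C g)"
   "c_cmp C (c_p1 C (c_cod C f) (c_cod C g)) h = f"
   "c_cmp C (c_p2 C (c_cod C f) (c_cod C g)) h = g"
  shows "h = pairing C f g"
  unfolding pairing_def by (rule the1_equality[OF pair_ex1[OF assms(1-3)], symmetric]) (intro conjI assms(4-8))

lemma curry_ex1:
  assumes "f \<in> c_mor C" "c_dom C f = BTimes X Y"
  shows "\<exists>!h. h \<in> c_mor C \<and> c_dom C h = X \<and> c_cod C h = BExp Y (c_cod C f)
            \<and> c_cmp C (c_ev C Y (c_cod C f)) (prodmap C h (c_id C Y)) = f"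
  using ax(10) assms by blast

lemma curry_ok:
  assumes "f \<in> c_mor C" "c_dom C f = BTimes X Y"
  shows "curry_m C X Y f \<in> c_mor C \<and> c_dom C (curry_m C X Y f) = X
     \<and> c_cod C (curry_m C X Y f) = BExp Y (c_cod C f)
     \<and> c_cmp C (c_ev C Y (c_cod C f)) (prodmap C (curry_m C X Y f) (c_id C Y)) = f"
  unfolding curry_m_def by (rule theI'[OF curry_ex1[OF assms]])

lemma curry_uniq:
  assumes "f \<in> c_mor C" "c_dom C f = BTimes X Y"
   "h \<in> c_mor C" "c_dom C h = X" "c_cod C h = BExp Y (c_cod C f)"
   "c_cmp C (c_ev C Y (c_cod C f)) (prodmap C h (c_id C Y)) = f"
  shows "h = curry_m C X Y f"
  unfolding curry_m_def by (rule the1_equality[OF curry_ex1[OF assms(1,2)], symmetric]) (intro conjI assms(3-6))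

end

context dctx begin
lemma interp_ok: "wt t \<Longrightarrow> interp C t \<in> c_mor C \<and> c_dom C (interp C t) = tdom t \<and> c_cod C (interp C t) = tcod t"
proof (induction t)
  case (TCurry t)
  then obtain X Y where XY: "tdom t = BTimes X Y" by (cases "tdom t") auto
  have f: "interp C t \<in> c_mor C" "c_dom C (interp C t) = BTimes X Y" "c_cod C (interp C t) = tcod t"
    using TCurry.IH TCurry.prems XY by auto
  have e: "interp C (TCurry t) = curry_m C X Y (interp C t)" "tdom (TCurry t) = X" "tcod (TCurry t) = BExp Y (tcod t)"
    using XY by auto
  show ?case unfolding e using curry_ok[OF f(1,2)] f(3) by simp
next
  case (TComp t u)
  then show ?case using cmp_ok[of "interp C t" "interp C u"] by simp
next
  case (TPair t u)
  then show ?case using pair_ok[of "interp C t" "interp C u"] by simp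
qed (simp_all add: id_ok bang_ok p1_ok p2_ok ev_ok)
end

context dctx begin

lemma nax:
  "\<forall>f\<in>c_mor C. 0 \<in> ns_D D f \<and> (\<forall>x\<in>ns_D D f. \<forall>y\<in>ns_D D f. x + y \<in> ns_D D f) \<and>
        (\<forall>x\<in>ns_D D f. - x \<in> ns_D D f)"
  "\<forall>f\<in>c_mor C. \<forall>a\<in>c_mor C. \<forall>b\<in>c_mor C. c_cod C a = c_dom C f \<longrightarrow> c_dom C b = c_cod C f \<longrightarrow>
        (\<forall>x\<in>ns_D D f. ns_map D f a b x \<in> ns_D D (c_cmp C b (c_cmp C f a))) \<and>
        (\<forall>x\<in>ns_D D f. \<forall>y\<in>ns_D D f. ns_map D f a b (x + y) = ns_map D f a b x + ns_map D f a b y)"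
  "\<forall>f\<in>c_mor C. \<forall>x\<in>ns_D D f. ns_map D f (c_id C (c_dom C f)) (c_id C (c_cod C f)) x = x"
  by (insert NN[unfolded is_natsys_def], (elim conjE, assumption)+)

lemma D0: "f \<in> c_mor C \<Longrightarrow> 0 \<in> ns_D D f" using nax(1) by blast
lemma Dadd: "f \<in> c_mor C \<Longrightarrow> x \<in> ns_D D f \<Longrightarrow> y \<in> ns_D D f \<Longrightarrow> x + y \<in> ns_D D f" using nax(1) by blast
lemma Dneg: "f \<in> c_mor C \<Longrightarrow> x \<in> ns_D D f \<Longrightarrow> - x \<in> ns_D D f" using nax(1) by blast

lemma lower_in:
  assumes "f \<in> c_mor C" "a \<in> c_mor C" "c_dom C a = c_cod C f" "x \<in> ns_D D f"
  shows "lower C D f a x \<in> ns_D D (c_cmp C a f)"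
proof -
  have "ns_map D f (c_id C (c_dom C f)) a x \<in> ns_D D (c_cmp C a (c_cmp C f (c_id C (c_dom C f))))"
    using nax(2) assms id_ok by blast
  then show ?thesis unfolding lower_def using id_r[OF assms(1)] by simp
qed

lemma lower_add:
  assumes "f \<in> c_mor C" "a \<in> c_mor C" "c_dom C a = c_cod C f" "x \<in> ns_D D f" "y \<in> ns_D D f"
  shows "lower C D f a (x + y) = lower C D f a x + lower C D f a y"
  unfolding lower_def using nax(2) assms id_ok by blast

lemma lower_0:
  assumes "f \<in> c_mor C" "a \<in> c_mor C" "c_dom C a = c_cod C f"
  shows "lower C D f a 0 = 0"
  using lower_add[OF assms D0 D0] assms(1) by simp

lemma lower_neg:
  assumes "f \<in> c_mor C" "a \<in> c_mor C" "c_dom C a = c_cod C f" "x \<in> ns_D D f"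
  shows "lower C D f a (- x) = - lower C D f a x"
  using lower_add[OF assms(1-3) Dneg[OF assms(1,4)] assms(4)] lower_0[OF assms(1-3)]
  by (simp add: eq_neg_iff_add_eq_0)

lemma upper_in:
  assumes "g \<in> c_mor C" "a \<in> c_mor C" "c_cod C a = c_dom C g" "x \<in> ns_D D g"
  shows "upper C D g a x \<in> ns_D D (c_cmp C g a)"
proof -
  have "ns_map D g a (c_id C (c_cod C g)) x \<in> ns_D D (c_cmp C (c_id C (c_cod C g)) (c_cmp C g a))"
    using nax(2) assms id_ok by blast
  moreover have "c_cmp C (c_id C (c_cod C g)) (c_cmp C g a) = c_cmp C g a"
    using id_l[OF cmp_ok(1)[OF assms(1,2)]] cmp_ok(3)[OF assms(1,2)] assms(3) by simp
  ultimately show ?thesis unfolding upper_def by simp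
qed

lemma upper_add:
  assumes "g \<in> c_mor C" "a \<in> c_mor C" "c_cod C a = c_dom C g" "x \<in> ns_D D g" "y \<in> ns_D D g"
  shows "upper C D g a (x + y) = upper C D g a x + upper C D g a y"
  unfolding upper_def using nax(2) assms id_ok by blast

lemma upper_0:
  assumes "g \<in> c_mor C" "a \<in> c_mor C" "c_cod C a = c_dom C g"
  shows "upper C D g a 0 = 0"
  using upper_add[OF assms D0 D0] assms(1) by simp

lemma upper_neg:
  assumes "g \<in> c_mor C" "a \<in> c_mor C" "c_cod C a = c_dom C g" "x \<in> ns_D D g"
  shows "upper C D g a (- x) = - upper C D g a x"
  using upper_add[OF assms(1-3) Dneg[OF assms(1,4)] assms(4)] upper_0[OF assms(1-3)]
  by (simp add: eq_neg_iff_add_eq_0)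

lemma lower_id:
  assumes "f \<in> c_mor C" "x \<in> ns_D D f"
  shows "lower C D f (c_id C (c_cod C f)) x = x"
  unfolding lower_def using nax(3) assms by blast

lemma cax:
  "\<forall>f\<in>c_mor C. c_cod C f = BOne \<longrightarrow> ns_D D f = {0}"
  "\<forall>f\<in>c_mor C. \<forall>X Y. c_cod C f = BTimes X Y \<longrightarrow>
       bij_betw (\<lambda>x. (lower C D f (c_p1 C X Y) x, lower C D f (c_p2 C X Y) x))
         (ns_D D f) (ns_D D (c_cmp C (c_p1 C X Y) f) \<times> ns_D D (c_cmp C (c_p2 C X Y) f))"
  "\<forall>f\<in>c_mor C. \<forall>X Y. c_dom C f = BTimes X Y \<longrightarrow>
       (let lf = curry_m C X Y f in
        bij_betw (\<lambda>x. lower C D (prodmap C lf (c_id C Y)) (c_ev C Y (c_cod C f)) (phi0 C D X Y lf x))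
          (ns_D D lf) (ns_D D f))"
  by (insert CL[unfolded is_cart_closed_def is_cartesian_def], (elim conjE, assumption)+)

lemma cart_one: "f \<in> c_mor C \<Longrightarrow> c_cod C f = BOne \<Longrightarrow> ns_D D f = {0}"
  using cax(1) by blast

lemma cart_inj:
  assumes "f \<in> c_mor C" "c_cod C f = BTimes X Y" "x \<in> ns_D D f" "y \<in> ns_D D f"
    "lower C D f (c_p1 C X Y) x = lower C D f (c_p1 C X Y) y"
    "lower C D f (c_p2 C X Y) x = lower C D f (c_p2 C X Y) y"
  shows "x = y"
proof -
  have "bij_betw (\<lambda>x. (lower C D f (c_p1 C X Y) x, lower C D f (c_p2 C X Y) x))
         (ns_D D f) (ns_D D (c_cmp C (c_p1 C X Y) f) \<times> ns_D D (c_cmp C (c_p2 C X Y) f))"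
    using cax(2) assms(1,2) by blast
  then have "inj_on (\<lambda>x. (lower C D f (c_p1 C X Y) x, lower C D f (c_p2 C X Y) x)) (ns_D D f)"
    by (rule bij_betw_imp_inj_on)
  then show ?thesis using assms(3-6) by (auto dest: inj_onD)
qed

lemma cart_surj:
  assumes "f \<in> c_mor C" "c_cod C f = BTimes X Y"
    "u \<in> ns_D D (c_cmp C (c_p1 C X Y) f)" "v \<in> ns_D D (c_cmp C (c_p2 C X Y) f)"
  shows "\<exists>z\<in>ns_D D f. lower C D f (c_p1 C X Y) z = u \<and> lower C D f (c_p2 C X Y) z = v"
proof -
  have "bij_betw (\<lambda>x. (lower C D f (c_p1 C X Y) x, lower C D f (c_p2 C X Y) x))
         (ns_D D f) (ns_D D (c_cmp C (c_p1 C X Y) f) \<times> ns_D D (c_cmp C (c_p2 C X Y) f))"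
    using cax(2) assms(1,2) by blast
  then have "(u, v) \<in> (\<lambda>x. (lower C D f (c_p1 C X Y) x, lower C D f (c_p2 C X Y) x)) ` ns_D D f"
    using assms(3,4) by (simp add: bij_betw_def)
  then show ?thesis by force
qed

lemma cc_bij:
  assumes "f \<in> c_mor C" "c_dom C f = BTimes X Y"
  shows "bij_betw (\<lambda>x. lower C D (prodmap C (curry_m C X Y f) (c_id C Y)) (c_ev C Y (c_cod C f))
             (phi0 C D X Y (curry_m C X Y f) x)) (ns_D D (curry_m C X Y f)) (ns_D D f)"
  using cax(3) assms by (simp add: Let_def)

end

context dctx begin

lemma pair_triv:
  assumes a: "a \<in> c_mor C" and b: "b \<in> c_mor C" and x: "x \<in> ns_D D a" and y: "y \<in> ns_D D b"
    and ab: "c_dom C a = c_dom C b"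
  shows "\<exists>z. pairing (triv C D) (a, x) (b, y) = (pairing C a b, z) \<and> z \<in> ns_D D (pairing C a b)
     \<and> lower C D (pairing C a b) (c_p1 C (c_cod C a) (c_cod C b)) z = x
     \<and> lower C D (pairing C a b) (c_p2 C (c_cod C a) (c_cod C b)) z = y"
proof -
  define h where "h = pairing C a b"
  note hp = pair_ok[OF a b ab, folded h_def]
  let ?P1 = "c_p1 C (c_cod C a) (c_cod C b)" and ?P2 = "c_p2 C (c_cod C a) (c_cod C b)"
  have P: "?P1 \<in> c_mor C" "c_dom C ?P1 = c_cod C h" "?P2 \<in> c_mor C" "c_dom C ?P2 = c_cod C h"
    using hp p1_ok p2_ok by auto
  obtain z where z: "z \<in> ns_D D h" "lower C D h ?P1 z = x" "lower C D h ?P2 z = y"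
    using cart_surj[of h "c_cod C a" "c_cod C b" x y] hp x y by auto
  have u1: "upper C D ?P1 h 0 = 0" and u2: "upper C D ?P2 h 0 = 0"
    using upper_0 P hp by auto
  have "pairing (triv C D) (a, x) (b, y) = (h, z)"
    unfolding pairing_def
  proof (rule the_equality)
    show "(h, z) \<in> c_mor (triv C D) \<and> c_dom (triv C D) (h, z) = c_dom (triv C D) (a, x) \<and>
      c_cod (triv C D) (h, z) = BTimes (c_cod (triv C D) (a, x)) (c_cod (triv C D) (b, y)) \<and>
      c_cmp (triv C D) (c_p1 (triv C D) (c_cod (triv C D) (a, x)) (c_cod (triv C D) (b, y))) (h, z) = (a, x) \<and>
      c_cmp (triv C D) (c_p2 (triv C D) (c_cod (triv C D) (a, x)) (c_cod (triv C D) (b, y))) (h, z) = (b, y)"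
      using hp z u1 u2 by simp
  next
    fix k assume k: "k \<in> c_mor (triv C D) \<and> c_dom (triv C D) k = c_dom (triv C D) (a, x) \<and>
      c_cod (triv C D) k = BTimes (c_cod (triv C D) (a, x)) (c_cod (triv C D) (b, y)) \<and>
      c_cmp (triv C D) (c_p1 (triv C D) (c_cod (triv C D) (a, x)) (c_cod (triv C D) (b, y))) k = (a, x) \<and>
      c_cmp (triv C D) (c_p2 (triv C D) (c_cod (triv C D) (a, x)) (c_cod (triv C D) (b, y))) k = (b, y)"
    obtain k1 k2 where kk: "k = (k1, k2)" by (cases k)
    have k1: "k1 \<in> c_mor C" "k2 \<in> ns_D D k1" "c_dom C k1 = c_dom C a" "c_cod C k1 = BTimes (c_cod C a) (c_cod C b)"
      "c_cmp C ?P1 k1 = a" "c_cmp C ?P2 k1 = b"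
      "lower C D k1 ?P1 k2 + upper C D ?P1 k1 0 = x" "lower C D k1 ?P2 k2 + upper C D ?P2 k1 0 = y"
      using k kk by auto
    have "k1 = h" unfolding h_def by (rule pair_uniq[OF a b ab k1(1,3,4,5,6)])
    with k1 u1 u2 have "lower C D h ?P1 k2 = x" "lower C D h ?P2 k2 = y" "k2 \<in> ns_D D h" by auto
    then have "k2 = z" using cart_inj[of h "c_cod C a" "c_cod C b" k2 z] hp z by auto
    then show "k = (h, z)" using kk \<open>k1 = h\<close> by simp
  qed
  then show ?thesis using z unfolding h_def by blast
qed

lemma phi0_char:
  assumes k1: "k1 \<in> c_mor C" "c_dom C k1 = X" and k2: "k2 \<in> ns_D D k1"
    and z: "z \<in> ns_D D (prodmap C k1 (c_id C Y))"
    "lower C D (prodmap C k1 (c_id C Y)) (c_p1 C (c_cod C k1) Y) z = upper C D k1 (c_p1 C X Y) k2"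
    "lower C D (prodmap C k1 (c_id C Y)) (c_p2 C (c_cod C k1) Y) z = 0"
  shows "phi0 C D X Y k1 k2 = z"
proof -
  define g where "g = prodmap C k1 (c_id C Y)"
  have a: "c_cmp C k1 (c_p1 C X Y) \<in> c_mor C" "c_dom C (c_cmp C k1 (c_p1 C X Y)) = BTimes X Y"
      "c_cod C (c_cmp C k1 (c_p1 C X Y)) = c_cod C k1"
    using cmp_ok[of k1 "c_p1 C X Y"] k1 p1_ok by auto
  have b: "c_cmp C (c_id C Y) (c_p2 C X Y) \<in> c_mor C" "c_dom C (c_cmp C (c_id C Y) (c_p2 C X Y)) = BTimes X Y"
      "c_cod C (c_cmp C (c_id C Y) (c_p2 C X Y)) = Y"
    using cmp_ok[of "c_id C Y" "c_p2 C X Y"] id_ok p2_ok by auto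
  have gdef: "g = pairing C (c_cmp C k1 (c_p1 C X Y)) (c_cmp C (c_id C Y) (c_p2 C X Y))"
    unfolding g_def prodmap_def using k1 id_ok by simp
  have gp: "g \<in> c_mor C" "c_cod C g = BTimes (c_cod C k1) Y"
    using pair_ok[OF a(1) b(1)] a b gdef by auto
  show ?thesis unfolding phi0_def Let_def g_def[symmetric]
  proof (rule the_equality)
    show "z \<in> ns_D D g \<and> lower C D g (c_p1 C (c_cod C k1) Y) z = upper C D k1 (c_p1 C X Y) k2 \<and>
      lower C D g (c_p2 C (c_cod C k1) Y) z = 0" using z g_def by simp
  next
    fix y assume y: "y \<in> ns_D D g \<and> lower C D g (c_p1 C (c_cod C k1) Y) y = upper C D k1 (c_p1 C X Y) k2 \<and>
      lower C D g (c_p2 C (c_cod C k1) Y) y = 0"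
    show "y = z" using cart_inj[OF gp(1,2), of y z] y z g_def by simp
  qed
qed

lemma ev_prod_triv:
  assumes k1: "k1 \<in> c_mor C" "c_dom C k1 = X" "c_cod C k1 = BExp Y Z" and k2: "k2 \<in> ns_D D k1"
  shows "c_cmp (triv C D) (c_ev (triv C D) Y Z) (prodmap (triv C D) (k1, k2) (c_id (triv C D) Y))
     = (c_cmp C (c_ev C Y Z) (prodmap C k1 (c_id C Y)),
        lower C D (prodmap C k1 (c_id C Y)) (c_ev C Y Z) (phi0 C D X Y k1 k2))"
proof -
  let ?a = "c_cmp C k1 (c_p1 C X Y)" and ?b = "c_cmp C (c_id C Y) (c_p2 C X Y)"
  have a: "?a \<in> c_mor C" "c_dom C ?a = BTimes X Y" "c_cod C ?a = c_cod C k1"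
    using cmp_ok[of k1 "c_p1 C X Y"] k1 p1_ok by auto
  have b: "?b \<in> c_mor C" "c_dom C ?b = BTimes X Y" "c_cod C ?b = Y"
    using cmp_ok[of "c_id C Y" "c_p2 C X Y"] id_ok p2_ok by auto
  have pm: "prodmap C k1 (c_id C Y) = pairing C ?a ?b"
    unfolding prodmap_def using k1 id_ok by simp
  have l1: "lower C D (c_p1 C X Y) k1 0 = 0" using lower_0 k1 p1_ok by simp
  have l2: "lower C D (c_p2 C X Y) (c_id C Y) 0 = 0" using lower_0 id_ok p2_ok by simp
  have u2: "upper C D (c_id C Y) (c_p2 C X Y) 0 = 0" using upper_0 id_ok p2_ok by simp
  have ui: "upper C D k1 (c_p1 C X Y) k2 \<in> ns_D D ?a" using upper_in k1 k2 p1_ok by simp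
  have "prodmap (triv C D) (k1, k2) (c_id (triv C D) Y)
      = pairing (triv C D) (?a, upper C D k1 (c_p1 C X Y) k2) (?b, 0)"
    unfolding prodmap_def using k1 id_ok l1 l2 u2 by simp
  moreover obtain z where z: "pairing (triv C D) (?a, upper C D k1 (c_p1 C X Y) k2) (?b, 0) = (pairing C ?a ?b, z)"
     "z \<in> ns_D D (pairing C ?a ?b)"
     "lower C D (pairing C ?a ?b) (c_p1 C (c_cod C ?a) (c_cod C ?b)) z = upper C D k1 (c_p1 C X Y) k2"
     "lower C D (pairing C ?a ?b) (c_p2 C (c_cod C ?a) (c_cod C ?b)) z = 0"
    using pair_triv[OF a(1) b(1) ui D0[OF b(1)]] a b by auto
  moreover have "phi0 C D X Y k1 k2 = z"
    by (rule phi0_char[OF k1(1,2) k2]) (use z a b pm in auto)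
  moreover have "upper C D (c_ev C Y Z) (pairing C ?a ?b) 0 = 0"
    using upper_0[of "c_ev C Y Z" "pairing C ?a ?b"] ev_ok pair_ok[OF a(1) b(1)] a b k1 by simp
  ultimately show ?thesis using pm by simp
qed

lemma curry_triv:
  assumes f: "f \<in> c_mor C" "c_dom C f = BTimes X Y" and x: "x \<in> ns_D D f"
    and k2: "k2 \<in> ns_D D (curry_m C X Y f)"
    and eq: "lower C D (prodmap C (curry_m C X Y f) (c_id C Y)) (c_ev C Y (c_cod C f))
             (phi0 C D X Y (curry_m C X Y f) k2) = x"
  shows "curry_m (triv C D) X Y (f, x) = (curry_m C X Y f, k2)"
proof -
  define h where "h = curry_m C X Y f"
  note hp = curry_ok[OF f, folded h_def]
  note bj = cc_bij[OF f, folded h_def]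
  show ?thesis unfolding h_def[symmetric] curry_m_def[of "triv C D"]
  proof (rule the_equality)
    show "(h, k2) \<in> c_mor (triv C D) \<and> c_dom (triv C D) (h, k2) = X \<and>
      c_cod (triv C D) (h, k2) = BExp Y (c_cod (triv C D) (f, x)) \<and>
      c_cmp (triv C D) (c_ev (triv C D) Y (c_cod (triv C D) (f, x)))
        (prodmap (triv C D) (h, k2) (c_id (triv C D) Y)) = (f, x)"
      using hp k2 eq ev_prod_triv[of h X Y "c_cod C f" k2] unfolding h_def[symmetric] by simp
  next
    fix k assume k: "k \<in> c_mor (triv C D) \<and> c_dom (triv C D) k = X \<and>
      c_cod (triv C D) k = BExp Y (c_cod (triv C D) (f, x)) \<and>
      c_cmp (triv C D) (c_ev (triv C D) Y (c_cod (triv C D) (f, x)))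
        (prodmap (triv C D) k (c_id (triv C D) Y)) = (f, x)"
    obtain k1 k2' where kk: "k = (k1, k2')" by (cases k)
    have k1: "k1 \<in> c_mor C" "k2' \<in> ns_D D k1" "c_dom C k1 = X" "c_cod C k1 = BExp Y (c_cod C f)"
      using k kk by auto
    have e: "c_cmp C (c_ev C Y (c_cod C f)) (prodmap C k1 (c_id C Y)) = f"
       "lower C D (prodmap C k1 (c_id C Y)) (c_ev C Y (c_cod C f)) (phi0 C D X Y k1 k2') = x"
      using k kk ev_prod_triv[OF k1(1,3,4,2)] by auto
    have "k1 = h" unfolding h_def by (rule curry_uniq[OF f k1(1,3,4) e(1)])
    then have "k2' = k2" using bij_betw_imp_inj_on[OF bj] k1(2) k2 e(2) eq
      unfolding h_def[symmetric] by (auto dest: inj_onD)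
    then show "k = (h, k2)" using kk \<open>k1 = h\<close> by simp
  qed
qed

end


definition PhiD :: "('s,'m,'x) sccc_scheme \<Rightarrow> ('m \<Rightarrow> 'a) \<Rightarrow> 'm \<Rightarrow> 'm \<times> 'a" where
  "PhiD C d = (\<lambda>f. if f \<in> c_mor C then (f, d f) else undefined)"

definition PsiD :: "('s,'m,'x) sccc_scheme \<Rightarrow> ('m \<Rightarrow> 'm \<times> 'a) \<Rightarrow> 'm \<Rightarrow> 'a" where
  "PsiD C s = (\<lambda>f. if f \<in> c_mor C then snd (s f) else undefined)"

context dctx begin

lemma DF:
  assumes "d \<in> DerFun C D"
  shows DF_in: "\<And>f. f \<in> c_mor C \<Longrightarrow> d f \<in> ns_D D f"
    and DF_cmp: "\<And>f g. f \<in> c_mor C \<Longrightarrow> g \<in> c_mor C \<Longrightarrow> c_dom C f = c_cod C g \<Longrightarrow>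
         d (c_cmp C f g) = lower C D g f (d g) + upper C D f g (d f)"
    and DF_p1: "\<And>X Y. d (c_p1 C X Y) = 0" and DF_p2: "\<And>X Y. d (c_p2 C X Y) = 0"
    and DF_ev: "\<And>Y Z. d (c_ev C Y Z) = 0"
    and DF_ext: "d \<in> extensional (c_mor C)"
  using assms unfolding DerFun_def by auto

lemma DF_id:
  assumes d: "d \<in> DerFun C D"
  shows "d (c_id C X) = 0"
proof -
  have i: "c_id C X \<in> c_mor C" "c_dom C (c_id C X) = X" "c_cod C (c_id C X) = X" using id_ok by auto
  have ii: "c_cmp C (c_id C X) (c_id C X) = c_id C X" using id_l[OF i(1)] i by simp
  have "lower C D (c_id C X) (c_id C X) (d (c_id C X)) = d (c_id C X)"
    using lower_id[OF i(1) DF_in[OF d i(1)]] i by simp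
  moreover have "upper C D (c_id C X) (c_id C X) (d (c_id C X)) = d (c_id C X)"
  proof -
    have "ns_map D (c_id C X) (c_id C (c_dom C (c_id C X))) (c_id C (c_cod C (c_id C X))) (d (c_id C X)) = d (c_id C X)"
      using nax(3) i(1) DF_in[OF d i(1)] by blast
    then show ?thesis using i(2,3) unfolding upper_def by simp
  qed
  ultimately have "d (c_id C X) = d (c_id C X) + d (c_id C X)"
    using DF_cmp[OF d i(1) i(1)] i ii by simp
  then show ?thesis by simp
qed

lemma DF_pair:
  assumes d: "d \<in> DerFun C D" and a: "a \<in> c_mor C" and b: "b \<in> c_mor C" and ab: "c_dom C a = c_dom C b"
  shows "lower C D (pairing C a b) (c_p1 C (c_cod C a) (c_cod C b)) (d (pairing C a b)) = d a"
    "lower C D (pairing C a b) (c_p2 C (c_cod C a) (c_cod C b)) (d (pairing C a b)) = d b"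
proof -
  define h where "h = pairing C a b"
  define P1 where "P1 = c_p1 C (c_cod C a) (c_cod C b)"
  define P2 where "P2 = c_p2 C (c_cod C a) (c_cod C b)"
  have hp: "h \<in> c_mor C" "c_cod C h = BTimes (c_cod C a) (c_cod C b)" "c_cmp C P1 h = a" "c_cmp C P2 h = b"
    using pair_ok[OF a b ab] unfolding h_def P1_def P2_def by auto
  have P: "P1 \<in> c_mor C" "c_dom C P1 = c_cod C h" "P2 \<in> c_mor C" "c_dom C P2 = c_cod C h" "d P1 = 0" "d P2 = 0"
    unfolding P1_def P2_def using p1_ok p2_ok hp(2) DF_p1[OF d] DF_p2[OF d] by auto
  have "d a = lower C D h P1 (d h) + upper C D P1 h (d P1)"
    using DF_cmp[OF d P(1) hp(1) P(2)] hp(3) by simp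
  also have "upper C D P1 h (d P1) = 0" using P(5) upper_0[OF P(1) hp(1)] P(2) by simp
  finally show "lower C D (pairing C a b) (c_p1 C (c_cod C a) (c_cod C b)) (d (pairing C a b)) = d a"
    unfolding h_def P1_def by simp
  have "d b = lower C D h P2 (d h) + upper C D P2 h (d P2)"
    using DF_cmp[OF d P(3) hp(1) P(4)] hp(4) by simp
  also have "upper C D P2 h (d P2) = 0" using P(6) upper_0[OF P(3) hp(1)] P(4) by simp
  finally show "lower C D (pairing C a b) (c_p2 C (c_cod C a) (c_cod C b)) (d (pairing C a b)) = d b"
    unfolding h_def P2_def by simp
qed

lemma DF_pair_triv:
  assumes d: "d \<in> DerFun C D" and a: "a \<in> c_mor C" and b: "b \<in> c_mor C" and ab: "c_dom C a = c_dom C b"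
  shows "pairing (triv C D) (a, d a) (b, d b) = (pairing C a b, d (pairing C a b))"
proof -
  have hp: "pairing C a b \<in> c_mor C" "c_cod C (pairing C a b) = BTimes (c_cod C a) (c_cod C b)"
    using pair_ok[OF a b ab] by auto
  obtain z where z: "pairing (triv C D) (a, d a) (b, d b) = (pairing C a b, z)" "z \<in> ns_D D (pairing C a b)"
     "lower C D (pairing C a b) (c_p1 C (c_cod C a) (c_cod C b)) z = d a"
     "lower C D (pairing C a b) (c_p2 C (c_cod C a) (c_cod C b)) z = d b"
    using pair_triv[OF a b DF_in[OF d a] DF_in[OF d b] ab] by blast
  have "z = d (pairing C a b)"
    by (rule cart_inj[OF hp z(2) DF_in[OF d hp(1)]]) (use z DF_pair[OF d a b ab] in simp_all)
  then show ?thesis using z by simp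
qed

lemma DF_curry:
  assumes d: "d \<in> DerFun C D" and f: "f \<in> c_mor C" "c_dom C f = BTimes X Y"
  shows "lower C D (prodmap C (curry_m C X Y f) (c_id C Y)) (c_ev C Y (c_cod C f))
             (phi0 C D X Y (curry_m C X Y f) (d (curry_m C X Y f))) = d f"
proof -
  define h where "h = curry_m C X Y f"
  have hp: "h \<in> c_mor C" "c_dom C h = X" "c_cod C h = BExp Y (c_cod C f)"
    "c_cmp C (c_ev C Y (c_cod C f)) (prodmap C h (c_id C Y)) = f"
    using curry_ok[OF f] unfolding h_def by auto
  define a where "a = c_cmp C h (c_p1 C X Y)"
  define b where "b = c_cmp C (c_id C Y) (c_p2 C X Y)"
  have a: "a \<in> c_mor C" "c_dom C a = BTimes X Y" "c_cod C a = c_cod C h"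
    using cmp_ok[of h "c_p1 C X Y"] hp p1_ok unfolding a_def by auto
  have b: "b \<in> c_mor C" "c_dom C b = BTimes X Y" "c_cod C b = Y"
    using cmp_ok[of "c_id C Y" "c_p2 C X Y"] id_ok p2_ok unfolding b_def by auto
  define g where "g = prodmap C h (c_id C Y)"
  have gd: "g = pairing C a b" unfolding g_def prodmap_def a_def b_def using hp id_ok by simp
  have gp: "g \<in> c_mor C" "c_cod C g = BTimes (c_cod C h) Y"
    using pair_ok[OF a(1) b(1)] a b gd by auto
  have da: "d a = upper C D h (c_p1 C X Y) (d h)"
  proof -
    have "d a = lower C D (c_p1 C X Y) h (d (c_p1 C X Y)) + upper C D h (c_p1 C X Y) (d h)"
      unfolding a_def by (rule DF_cmp[OF d hp(1) p1_ok(1)]) (simp add: hp p1_ok)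
    then show ?thesis using DF_p1[OF d] lower_0[OF p1_ok(1) hp(1)] hp(2) p1_ok(3) by simp
  qed
  have db: "d b = 0"
  proof -
    have "d b = lower C D (c_p2 C X Y) (c_id C Y) (d (c_p2 C X Y)) + upper C D (c_id C Y) (c_p2 C X Y) (d (c_id C Y))"
      unfolding b_def by (rule DF_cmp[OF d id_ok(1) p2_ok(1)]) (simp add: id_ok p2_ok)
    then show ?thesis using DF_p2[OF d] DF_id[OF d] lower_0[OF p2_ok(1) id_ok(1)]
      upper_0[OF id_ok(1) p2_ok(1)] id_ok p2_ok by simp
  qed
  have l: "lower C D g (c_p1 C (c_cod C h) Y) (d g) = d a" "lower C D g (c_p2 C (c_cod C h) Y) (d g) = d b"
    using DF_pair[OF d a(1) b(1)] a b gd by simp_all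
  have dg: "phi0 C D X Y h (d h) = d g"
    by (rule phi0_char[OF hp(1,2) DF_in[OF d hp(1)]]) (use DF_in[OF d gp(1)] l da db g_def in simp_all)
  have "d (c_cmp C (c_ev C Y (c_cod C f)) g) = lower C D g (c_ev C Y (c_cod C f)) (d g) + upper C D (c_ev C Y (c_cod C f)) g (d (c_ev C Y (c_cod C f)))"
    by (rule DF_cmp[OF d ev_ok(1) gp(1)]) (simp add: ev_ok gp hp)
  then have "d f = lower C D g (c_ev C Y (c_cod C f)) (d g) + upper C D (c_ev C Y (c_cod C f)) g (d (c_ev C Y (c_cod C f)))"
    using hp(4) g_def by simp
  also have "upper C D (c_ev C Y (c_cod C f)) g (d (c_ev C Y (c_cod C f))) = 0"
    using DF_ev[OF d] upper_0[OF ev_ok(1) gp(1)] ev_ok gp hp by simp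
  finally show ?thesis using dg g_def h_def by simp
qed

lemma DF_interp:
  assumes d: "d \<in> DerFun C D"
  shows "wt t \<Longrightarrow> interp (triv C D) t = (interp C t, d (interp C t))"
proof (induction t)
  case (TId X) then show ?case using DF_id[OF d] by simp
next
  case (TBang X)
  have bo: "bang C X \<in> c_mor C" "c_dom C (bang C X) = X" "c_cod C (bang C X) = BOne" using bang_ok by auto
  have z: "ns_D D (bang C X) = {0}" using cart_one bo by simp
  have "bang (triv C D) X = (bang C X, 0)" unfolding bang_def[of "triv C D"]
  proof (rule the_equality)
    show "(bang C X, 0) \<in> c_mor (triv C D) \<and> c_dom (triv C D) (bang C X, 0) = X \<and> c_cod (triv C D) (bang C X, 0) = BOne"
      using bo z by simp
  next
    fix k assume k: "k \<in> c_mor (triv C D) \<and> c_dom (triv C D) k = X \<and> c_cod (triv C D) k = BOne"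
    obtain k1 k2 where kk: "k = (k1, k2)" by (cases k)
    have "k1 = bang C X" using bang_uniq k kk by auto
    then show "k = (bang C X, 0)" using k kk z by auto
  qed
  moreover have "d (bang C X) = 0" using DF_in[OF d bo(1)] z by simp
  ultimately show ?case by simp
next
  case (TP1 X Y) then show ?case using DF_p1[OF d] by simp
next
  case (TP2 X Y) then show ?case using DF_p2[OF d] by simp
next
  case (TEv X Y) then show ?case using DF_ev[OF d] by simp
next
  case (TComp t u)
  have o: "interp C t \<in> c_mor C" "interp C u \<in> c_mor C" "c_dom C (interp C t) = c_cod C (interp C u)"
    using interp_ok TComp.prems by auto
  show ?case using TComp DF_cmp[OF d o] by simp
next
  case (TPair t u)
  have o: "interp C t \<in> c_mor C" "interp C u \<in> c_mor C" "c_dom C (interp C t) = c_dom C (interp C u)"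
    using interp_ok TPair.prems by auto
  show ?case using TPair DF_pair_triv[OF d o] by simp
next
  case (TCurry t)
  then obtain X Y where XY: "tdom t = BTimes X Y" by (cases "tdom t") auto
  have f: "interp C t \<in> c_mor C" "c_dom C (interp C t) = BTimes X Y"
    using interp_ok TCurry.prems XY by auto
  have e: "interp C (TCurry t) = curry_m C X Y (interp C t)" 
    "interp (triv C D) (TCurry t) = curry_m (triv C D) X Y (interp (triv C D) t)" using XY by auto
  have "interp (triv C D) t = (interp C t, d (interp C t))" using TCurry by simp
  then show ?case unfolding e
    using curry_triv[OF f DF_in[OF d f(1)] DF_in[OF d curry_ok[OF f, THEN conjunct1]] DF_curry[OF d f]]
    by simp
qed

end

context dctx begin

lemma Phi_Der:
  assumes d: "d \<in> DerFun C D"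
  shows "PhiD C d \<in> Der C D"
  unfolding Der_def
proof (intro CollectI conjI ballI allI impI)
  show "PhiD C d \<in> extensional (c_mor C)" unfolding PhiD_def extensional_def by simp
next
  fix f assume "f \<in> c_mor C"
  then show "PhiD C d f \<in> c_mor (triv C D)" "fst (PhiD C d f) = f"
    unfolding PhiD_def using DF_in[OF d] by auto
next
  fix X show "PhiD C d (c_id C X) = c_id (triv C D) X"
    unfolding PhiD_def using id_ok DF_id[OF d] by simp
next
  fix f g assume fg: "f \<in> c_mor C" "g \<in> c_mor C" "c_dom C f = c_cod C g"
  show "PhiD C d (c_cmp C f g) = c_cmp (triv C D) (PhiD C d f) (PhiD C d g)"
    unfolding PhiD_def using fg cmp_ok(1)[OF fg] DF_cmp[OF d fg] by simp
next
  fix t :: "'s cterm" assume "wt t"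
  then show "PhiD C d (interp C t) = interp (triv C D) t"
    unfolding PhiD_def using interp_ok DF_interp[OF d] by simp
qed

lemma Der_props:
  assumes s: "s \<in> Der C D"
  shows Der_ext: "s \<in> extensional (c_mor C)"
    and Der_mor: "\<And>f. f \<in> c_mor C \<Longrightarrow> s f = (f, snd (s f)) \<and> snd (s f) \<in> ns_D D f"
    and Der_cmp: "\<And>f g. f \<in> c_mor C \<Longrightarrow> g \<in> c_mor C \<Longrightarrow> c_dom C f = c_cod C g \<Longrightarrow>
         s (c_cmp C f g) = c_cmp (triv C D) (s f) (s g)"
    and Der_interp: "\<And>t. wt t \<Longrightarrow> s (interp C t) = interp (triv C D) t"
proof -
  show "s \<in> extensional (c_mor C)" using s unfolding Der_def by blast
  show "\<And>f g. f \<in> c_mor C \<Longrightarrow> g \<in> c_mor C \<Longrightarrow> c_dom C f = c_cod C g \<Longrightarrow>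
         s (c_cmp C f g) = c_cmp (triv C D) (s f) (s g)" using s unfolding Der_def by blast
  show "\<And>t. wt t \<Longrightarrow> s (interp C t) = interp (triv C D) t" using s unfolding Der_def by blast
  fix f assume f: "f \<in> c_mor C"
  have "s f \<in> c_mor (triv C D) \<and> fst (s f) = f" using s f unfolding Der_def by blast
  then show "s f = (f, snd (s f)) \<and> snd (s f) \<in> ns_D D f" by (cases "s f") auto
qed

lemma Psi_DerFun:
  assumes s: "s \<in> Der C D"
  shows "PsiD C s \<in> DerFun C D"
  unfolding DerFun_def
proof (intro CollectI conjI ballI allI impI)
  show "PsiD C s \<in> extensional (c_mor C)" unfolding PsiD_def extensional_def by simp
next
  fix f assume "f \<in> c_mor C"
  then show "PsiD C s f \<in> ns_D D f" unfolding PsiD_def using Der_mor[OF s] by simp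
next
  fix f g assume fg: "f \<in> c_mor C" "g \<in> c_mor C" "c_dom C f = c_cod C g"
  have "s (c_cmp C f g) = c_cmp (triv C D) (f, snd (s f)) (g, snd (s g))"
    using Der_cmp[OF s fg] Der_mor[OF s] fg by metis
  then show "PsiD C s (c_cmp C f g) = lower C D g f (PsiD C s g) + upper C D f g (PsiD C s f)"
    unfolding PsiD_def using fg cmp_ok(1)[OF fg] by simp
next
  fix X Y
  have "s (c_p1 C X Y) = (c_p1 C X Y, 0)" "s (c_p2 C X Y) = (c_p2 C X Y, 0)"
    using Der_interp[OF s, of "TP1 X Y"] Der_interp[OF s, of "TP2 X Y"] by simp_all
  then show "PsiD C s (c_p1 C X Y) = 0" "PsiD C s (c_p2 C X Y) = 0"
    unfolding PsiD_def using p1_ok p2_ok by simp_all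
next
  fix Y Z
  have "s (c_ev C Y Z) = (c_ev C Y Z, 0)" using Der_interp[OF s, of "TEv Y Z"] by simp
  then show "PsiD C s (c_ev C Y Z) = 0" unfolding PsiD_def using ev_ok by simp
qed

lemma Phi_Psi: "s \<in> Der C D \<Longrightarrow> PhiD C (PsiD C s) = s"
proof
  fix f assume s: "s \<in> Der C D"
  show "PhiD C (PsiD C s) f = s f"
  proof (cases "f \<in> c_mor C")
    case True then show ?thesis unfolding PhiD_def PsiD_def using Der_mor[OF s True] by simp
  next
    case False then show ?thesis unfolding PhiD_def PsiD_def using Der_ext[OF s]
      by (simp add: extensional_def)
  qed
qed

lemma Psi_Phi: "d \<in> DerFun C D \<Longrightarrow> PsiD C (PhiD C d) = d"
proof
  fix f assume d: "d \<in> DerFun C D"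
  show "PsiD C (PhiD C d) f = d f"
    unfolding PhiD_def PsiD_def using DF_ext[OF d] by (simp add: extensional_def)
qed

lemma DerFun_add:
  assumes d: "d \<in> DerFun C D" and e: "e \<in> DerFun C D"
  shows "(\<lambda>f. if f \<in> c_mor C then d f + e f else undefined) \<in> DerFun C D"
  unfolding DerFun_def
proof (intro CollectI conjI ballI allI impI)
  show "(\<lambda>f. if f \<in> c_mor C then d f + e f else undefined) \<in> extensional (c_mor C)"
    unfolding extensional_def by simp
next
  fix f assume "f \<in> c_mor C"
  then show "(if f \<in> c_mor C then d f + e f else undefined) \<in> ns_D D f"
    using Dadd DF_in[OF d] DF_in[OF e] by simp
next
  fix f g assume fg: "f \<in> c_mor C" "g \<in> c_mor C" "c_dom C f = c_cod C g"
  have l: "lower C D g f (d g + e g) = lower C D g f (d g) + lower C D g f (e g)"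
    using lower_add fg DF_in[OF d] DF_in[OF e] by simp
  have u: "upper C D f g (d f + e f) = upper C D f g (d f) + upper C D f g (e f)"
    using upper_add fg DF_in[OF d] DF_in[OF e] by simp
  show "(if c_cmp C f g \<in> c_mor C then d (c_cmp C f g) + e (c_cmp C f g) else undefined) =
    lower C D g f (if g \<in> c_mor C then d g + e g else undefined) +
    upper C D f g (if f \<in> c_mor C then d f + e f else undefined)"
    using fg cmp_ok(1)[OF fg] DF_cmp[OF d fg] DF_cmp[OF e fg] l u by (simp add: algebra_simps)
next
  fix X Y show "(if c_p1 C X Y \<in> c_mor C then d (c_p1 C X Y) + e (c_p1 C X Y) else undefined) = 0"
    "(if c_p2 C X Y \<in> c_mor C then d (c_p2 C X Y) + e (c_p2 C X Y) else undefined) = 0"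
    using p1_ok p2_ok DF_p1[OF d] DF_p1[OF e] DF_p2[OF d] DF_p2[OF e] by simp_all
next
  fix Y Z show "(if c_ev C Y Z \<in> c_mor C then d (c_ev C Y Z) + e (c_ev C Y Z) else undefined) = 0"
    using ev_ok DF_ev[OF d] DF_ev[OF e] by simp
qed

lemma DerFun_neg:
  assumes d: "d \<in> DerFun C D"
  shows "(\<lambda>f. if f \<in> c_mor C then - d f else undefined) \<in> DerFun C D"
  unfolding DerFun_def
proof (intro CollectI conjI ballI allI impI)
  show "(\<lambda>f. if f \<in> c_mor C then - d f else undefined) \<in> extensional (c_mor C)"
    unfolding extensional_def by simp
next
  fix f assume "f \<in> c_mor C"
  then show "(if f \<in> c_mor C then - d f else undefined) \<in> ns_D D f"
    using Dneg DF_in[OF d] by simp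
next
  fix f g assume fg: "f \<in> c_mor C" "g \<in> c_mor C" "c_dom C f = c_cod C g"
  have l: "lower C D g f (- d g) = - lower C D g f (d g)"
    using lower_neg fg DF_in[OF d] by simp
  have u: "upper C D f g (- d f) = - upper C D f g (d f)"
    using upper_neg fg DF_in[OF d] by simp
  show "(if c_cmp C f g \<in> c_mor C then - d (c_cmp C f g) else undefined) =
    lower C D g f (if g \<in> c_mor C then - d g else undefined) +
    upper C D f g (if f \<in> c_mor C then - d f else undefined)"
    using fg cmp_ok(1)[OF fg] DF_cmp[OF d fg] l u by (simp add: algebra_simps)
next
  fix X Y show "(if c_p1 C X Y \<in> c_mor C then - d (c_p1 C X Y) else undefined) = 0"
    "(if c_p2 C X Y \<in> c_mor C then - d (c_p2 C X Y) else undefined) = 0"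
    using p1_ok p2_ok DF_p1[OF d] DF_p2[OF d] by simp_all
next
  fix Y Z show "(if c_ev C Y Z \<in> c_mor C then - d (c_ev C Y Z) else undefined) = 0"
    using ev_ok DF_ev[OF d] by simp
qed

lemma DerFun_zero: "(\<lambda>f. if f \<in> c_mor C then 0 else undefined) \<in> DerFun C D"
  unfolding DerFun_def
proof (intro CollectI conjI ballI allI impI)
  show "(\<lambda>f. if f \<in> c_mor C then 0 else undefined) \<in> extensional (c_mor C)"
    unfolding extensional_def by simp
next
  fix f assume "f \<in> c_mor C"
  then show "(if f \<in> c_mor C then 0 else undefined) \<in> ns_D D f" using D0 by simp
next
  fix f g assume fg: "f \<in> c_mor C" "g \<in> c_mor C" "c_dom C f = c_cod C g"
  show "(if c_cmp C f g \<in> c_mor C then 0 else undefined) =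
    lower C D g f (if g \<in> c_mor C then 0 else undefined) +
    upper C D f g (if f \<in> c_mor C then 0 else undefined)"
    using fg cmp_ok(1)[OF fg] lower_0[of g f] upper_0[of f g] by simp
qed (simp_all add: p1_ok p2_ok ev_ok)

lemma grpF: "comm_group (DerFun_grp C D)"
proof (rule comm_groupI)
  fix x y assume "x \<in> carrier (DerFun_grp C D)" "y \<in> carrier (DerFun_grp C D)"
  then show "x \<otimes>\<^bsub>DerFun_grp C D\<^esub> y \<in> carrier (DerFun_grp C D)"
    using DerFun_add unfolding DerFun_grp_def by simp
next
  show "\<one>\<^bsub>DerFun_grp C D\<^esub> \<in> carrier (DerFun_grp C D)"
    using DerFun_zero unfolding DerFun_grp_def by simp
next
  fix x y z assume "x \<in> carrier (DerFun_grp C D)" "y \<in> carrier (DerFun_grp C D)" "z \<in> carrier (DerFun_grp C D)"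
  show "x \<otimes>\<^bsub>DerFun_grp C D\<^esub> y \<otimes>\<^bsub>DerFun_grp C D\<^esub> z =
           x \<otimes>\<^bsub>DerFun_grp C D\<^esub> (y \<otimes>\<^bsub>DerFun_grp C D\<^esub> z)"
    unfolding DerFun_grp_def by (rule ext) (simp add: add.assoc)
next
  fix x y assume "x \<in> carrier (DerFun_grp C D)" "y \<in> carrier (DerFun_grp C D)"
  show "x \<otimes>\<^bsub>DerFun_grp C D\<^esub> y = y \<otimes>\<^bsub>DerFun_grp C D\<^esub> x"
    unfolding DerFun_grp_def by (rule ext) (simp add: add.commute)
next
  fix x assume x: "x \<in> carrier (DerFun_grp C D)"
  then have x': "x \<in> DerFun C D" unfolding DerFun_grp_def by simp
  show "\<one>\<^bsub>DerFun_grp C D\<^esub> \<otimes>\<^bsub>DerFun_grp C D\<^esub> x = x"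
    unfolding DerFun_grp_def using DF_ext[OF x'] by (intro ext) (simp add: extensional_def)
next
  fix x assume x: "x \<in> carrier (DerFun_grp C D)"
  then have x': "x \<in> DerFun C D" unfolding DerFun_grp_def by simp
  show "\<exists>y\<in>carrier (DerFun_grp C D). y \<otimes>\<^bsub>DerFun_grp C D\<^esub> x = \<one>\<^bsub>DerFun_grp C D\<^esub>"
    by (rule bexI[of _ "\<lambda>f. if f \<in> c_mor C then - x f else undefined"])
       (use DerFun_neg[OF x'] in \<open>auto simp: DerFun_grp_def\<close>)
qed

lemma Der_mult: "s \<in> Der C D \<Longrightarrow> s' \<in> Der C D \<Longrightarrow>
   s \<otimes>\<^bsub>Der_grp C D\<^esub> s' = PhiD C (PsiD C s \<otimes>\<^bsub>DerFun_grp C D\<^esub> PsiD C s')"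
  unfolding Der_grp_def DerFun_grp_def PhiD_def PsiD_def by (rule ext) simp

lemma Psi_mult: "s \<in> Der C D \<Longrightarrow> s' \<in> Der C D \<Longrightarrow>
   PsiD C (s \<otimes>\<^bsub>Der_grp C D\<^esub> s') = PsiD C s \<otimes>\<^bsub>DerFun_grp C D\<^esub> PsiD C s'"
  unfolding Der_grp_def DerFun_grp_def PsiD_def by (rule ext) simp

lemma grpD: "comm_group (Der_grp C D)"
proof (rule comm_groupI)
  fix x y assume "x \<in> carrier (Der_grp C D)" "y \<in> carrier (Der_grp C D)"
  then have "x \<in> Der C D" "y \<in> Der C D" unfolding Der_grp_def by simp_all
  then show "x \<otimes>\<^bsub>Der_grp C D\<^esub> y \<in> carrier (Der_grp C D)"
    using Der_mult Phi_Der DerFun_add Psi_DerFun unfolding Der_grp_def DerFun_grp_def by simp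
next
  have "\<one>\<^bsub>Der_grp C D\<^esub> = PhiD C (\<lambda>f. if f \<in> c_mor C then 0 else undefined)"
    unfolding Der_grp_def PhiD_def by (rule ext) simp
  then show "\<one>\<^bsub>Der_grp C D\<^esub> \<in> carrier (Der_grp C D)"
    using Phi_Der[OF DerFun_zero] unfolding Der_grp_def by simp
next
  fix x y z assume "x \<in> carrier (Der_grp C D)" "y \<in> carrier (Der_grp C D)" "z \<in> carrier (Der_grp C D)"
  show "x \<otimes>\<^bsub>Der_grp C D\<^esub> y \<otimes>\<^bsub>Der_grp C D\<^esub> z =
           x \<otimes>\<^bsub>Der_grp C D\<^esub> (y \<otimes>\<^bsub>Der_grp C D\<^esub> z)"
    unfolding Der_grp_def by (rule ext) (simp add: add.assoc)
next
  fix x y assume "x \<in> carrier (Der_grp C D)" "y \<in> carrier (Der_grp C D)"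
  show "x \<otimes>\<^bsub>Der_grp C D\<^esub> y = y \<otimes>\<^bsub>Der_grp C D\<^esub> x"
    unfolding Der_grp_def by (rule ext) (simp add: add.commute)
next
  fix x assume x: "x \<in> carrier (Der_grp C D)"
  then have x': "x \<in> Der C D" unfolding Der_grp_def by simp
  show "\<one>\<^bsub>Der_grp C D\<^esub> \<otimes>\<^bsub>Der_grp C D\<^esub> x = x"
  proof (rule ext)
    fix f show "(\<one>\<^bsub>Der_grp C D\<^esub> \<otimes>\<^bsub>Der_grp C D\<^esub> x) f = x f"
      using Der_mor[OF x', of f] Der_ext[OF x'] unfolding Der_grp_def
      by (cases "f \<in> c_mor C") (simp_all add: extensional_def)
  qed
next
  fix x assume x: "x \<in> carrier (Der_grp C D)"
  then have x': "x \<in> Der C D" unfolding Der_grp_def by simp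
  define y where "y = PhiD C (\<lambda>f. if f \<in> c_mor C then - PsiD C x f else undefined)"
  have "y \<in> Der C D" unfolding y_def by (rule Phi_Der[OF DerFun_neg[OF Psi_DerFun[OF x']]])
  moreover have "y \<otimes>\<^bsub>Der_grp C D\<^esub> x = \<one>\<^bsub>Der_grp C D\<^esub>"
    unfolding y_def Der_grp_def PhiD_def PsiD_def by (rule ext) simp
  ultimately show "\<exists>y\<in>carrier (Der_grp C D). y \<otimes>\<^bsub>Der_grp C D\<^esub> x = \<one>\<^bsub>Der_grp C D\<^esub>"
    unfolding Der_grp_def by auto
qed

lemma isoD: "Der_grp C D \<cong> DerFun_grp C D"
proof (rule is_isoI, rule isoI)
  show "PsiD C \<in> hom (Der_grp C D) (DerFun_grp C D)"
    unfolding hom_def using Psi_DerFun Psi_mult by (auto simp: Der_grp_def DerFun_grp_def)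
  show "bij_betw (PsiD C) (carrier (Der_grp C D)) (carrier (DerFun_grp C D))"
    by (rule bij_betw_byWitness[where f' = "PhiD C"])
      (auto simp: Der_grp_def DerFun_grp_def Phi_Psi Psi_Phi Psi_DerFun Phi_Der)
qed

end

theorem mainTheorem4:
  fixes C :: "('s, 'm) sccc" and D :: "('m, 'a::ab_group_add) natsys"
  assumes "is_sccc C" and "is_natsys C D" and "is_cart_closed C D"
  shows "comm_group (Der_grp C D) \<and> comm_group (DerFun_grp C D) \<and> Der_grp C D \<cong> DerFun_grp C D"
proof -
  interpret dctx C D using assms by unfold_locales
  show ?thesis using grpD grpF isoD by simp
qed

end
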